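(* Let $s,t\ge0$ be integers, let $S$ be any $s\times s$ integer matrix and $T$ any $t\times t$ integer matrix, and let $m,n,m',n'$ be positive integers with $m+n=m'+n'$. Then $H_{m,n}(z)-H_{m',n'}(z)$ is independent of $z$, i.e. it takes the same value for all integers $z$.
   Context: $h_k$ denotes the complete homogeneous symmetric function of degree $k$, with $h_0=1$ and $h_k=0$ for $k<0$. For integer matrices $S=(S_{ij})_{1\le i,j\le s}$, $T=(T_{ij})_{1\le i,j\le t}$, positive integers $m,n$ and any integer $z$, $H_{m,n}(z)$ is the determinant of the $(s+t+2)\times(s+t+2)$ matrix whose entries are as follows (rows and columns indexed $1,\dots,s+t+2$): - for $1\le i,j\le s$: $h_{S_{ij}}$; - row $s+1$, columns $1,\dots,s$: all $0$ except column $s$, which is $1$; rows $s+2,\dots,s+t+2$, columns $1,\dots,s$: $0$; - column $s+1$: $h_{S_{i,s}+m}$ in row $i\le s$, $h_m$ in row $s+1$, $h_z$ in row $s+2$, and $0$ in rows $>s+2$; - column $s+2$: $h_{S_{i,s}+m+n-z}$ in row $i\le s$, $h_{m+n-z}$ in row $s+1$, $h_n$ in row $s+2$, $1$ in row $s+3$ (if $t>0$), $0$ in rows $>s+3$; - column $s+2+j$ for $1\le j\le t$: $h_{S_{i,s}+m+n-z+T_{1j}}$ in row $i\le s$, $h_{m+n-z+T_{1j}}$ in row $s+1$, $h_{n+T_{1j}}$ in row $s+2$, and $h_{T_{ij}}$ in row $s+2+i$ for $1\le i\le t$. *)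

theory Defs
  imports "Jordan_Normal_Form.Determinant"
begin

text \<open>The complete homogeneous symmetric functions are modelled by an arbitrary
  sequence h :: int => 'a in a commutative ring with h 0 = 1 and h k = 0 for k < 0. Matrices S, T are given as functions nat => nat => int,
  indexed from 1 as in the paper. Entry (i,j) below uses 1-based indices.\<close>

definition H_entry ::
  "(int \<Rightarrow> 'a::comm_ring_1) \<Rightarrow> nat \<Rightarrow> nat \<Rightarrow> (nat \<Rightarrow> nat \<Rightarrow> int) \<Rightarrow> (nat \<Rightarrow> nat \<Rightarrow> int)
    \<Rightarrow> int \<Rightarrow> int \<Rightarrow> int \<Rightarrow> nat \<Rightarrow> nat \<Rightarrow> 'a" where
  "H_entry h s t S T m n z i j =
    (if j \<le> s then
       (if i \<le> s then h (S i j) else if i = s + 1 \<and> j = s then 1 else 0)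
     else if j = s + 1 then
       (if i \<le> s then h (S i s + m) else if i = s + 1 then h m
        else if i = s + 2 then h z else 0)
     else if j = s + 2 then
       (if i \<le> s then h (S i s + m + n - z) else if i = s + 1 then h (m + n - z)
        else if i = s + 2 then h n else if i = s + 3 \<and> t > 0 then 1 else 0)
     else
       (let k = j - (s + 2) in
        if i \<le> s then h (S i s + m + n - z + T 1 k)
        else if i = s + 1 then h (m + n - z + T 1 k)
        else if i = s + 2 then h (n + T 1 k)
        else h (T (i - (s + 2)) k)))"

definition H_mat ::
  "(int \<Rightarrow> 'a::comm_ring_1) \<Rightarrow> nat \<Rightarrow> nat \<Rightarrow> (nat \<Rightarrow> nat \<Rightarrow> int) \<Rightarrow> (nat \<Rightarrow> nat \<Rightarrow> int)
    \<Rightarrow> int \<Rightarrow> int \<Rightarrow> int \<Rightarrow> 'a mat" where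
  "H_mat h s t S T m n z =
     mat (s + t + 2) (s + t + 2) (\<lambda>(i, j). H_entry h s t S T m n z (i + 1) (j + 1))"

definition H_det ::
  "(int \<Rightarrow> 'a::comm_ring_1) \<Rightarrow> nat \<Rightarrow> nat \<Rightarrow> (nat \<Rightarrow> nat \<Rightarrow> int) \<Rightarrow> (nat \<Rightarrow> nat \<Rightarrow> int)
    \<Rightarrow> int \<Rightarrow> int \<Rightarrow> int \<Rightarrow> 'a" where
  "H_det h s t S T m n z = det (H_mat h s t S T m n z)"

end

theory Submission
  imports Defs
begin


lemma perm_block:
  fixes N K i :: nat
  assumes p: "p permutes {0..<N}" and KN: "K \<le> N"
    and hi: "\<forall>i. K \<le> i \<and> i < N \<longrightarrow> K \<le> p i"
    and i: "i < K"
  shows "p i < K"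
proof (rule ccontr)
  assume "\<not> p i < K"
  have pN: "x < N \<Longrightarrow> p x < N" for x using permutes_in_image[OF p, of x] by auto
  have sub: "p ` {K..<N} \<subseteq> {K..<N}"
    using hi pN by auto
  have inj: "inj_on p {K..<N}" using permutes_inj[OF p] by (auto intro: inj_on_subset)
  have eq: "p ` {K..<N} = {K..<N}" by (rule endo_inj_surj[OF _ sub inj]) simp
  have "p i \<in> {K..<N}" using \<open>\<not> p i < K\<close> i KN pN by auto
  then obtain j where j: "j \<in> {K..<N}" "p i = p j" using eq by (metis imageE)
  then have "i = j" using permutes_inj[OF p] by (auto dest: injD)
  then show False using j i by auto
qed

lemma det_block_eq:
  fixes A B :: "'a::comm_ring_1 mat"
  assumes A: "A \<in> carrier_mat N N" and B: "B \<in> carrier_mat N N" and KN: "K \<le> N"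
    and zA: "\<And>i j. K \<le> i \<Longrightarrow> i < N \<Longrightarrow> j < K \<Longrightarrow> A $$ (i,j) = 0"
    and zB: "\<And>i j. K \<le> i \<Longrightarrow> i < N \<Longrightarrow> j < K \<Longrightarrow> B $$ (i,j) = 0"
    and eq: "\<And>i j. i < N \<Longrightarrow> j < N \<Longrightarrow> \<not> (i < K \<and> K \<le> j) \<Longrightarrow> A $$ (i,j) = B $$ (i,j)"
  shows "det A = det B"
proof -
  have "(\<Prod>i = 0..<N. A $$ (i, p i)) = (\<Prod>i = 0..<N. B $$ (i, p i))"
    if p: "p permutes {0..<N}" for p
  proof (cases "\<forall>i. K \<le> i \<and> i < N \<longrightarrow> K \<le> p i")
    case True
    have lo: "i < K \<Longrightarrow> p i < K" for i using perm_block[OF p KN True] .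
    have pN: "i < N \<Longrightarrow> p i < N" for i using p by (auto simp: permutes_in_image)
    show ?thesis
    proof (rule prod.cong[OF refl])
      fix i assume "i \<in> {0..<N}"
      then show "A $$ (i, p i) = B $$ (i, p i)"
        using eq[of i "p i"] lo[of i] True pN[of i] by (cases "i < K") auto
    qed
  next
    case False
    then obtain i where i: "K \<le> i" "i < N" "p i < K" by (auto simp: not_le)
    have "A $$ (i, p i) = 0" "B $$ (i, p i) = 0" using zA zB i by auto
    then have "(\<Prod>i = 0..<N. A $$ (i, p i)) = 0" "(\<Prod>i = 0..<N. B $$ (i, p i)) = 0"
      using i by (auto intro!: prod_zero)
    then show ?thesis by simp
  qed
  then show ?thesis unfolding det_def'[OF A] det_def'[OF B] by (intro sum.cong) auto
qed

lemma det_split_entry: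
  fixes A :: "'a::comm_ring_1 mat"
  assumes A: "A \<in> carrier_mat N N" and r: "r < N" and c: "c < N"
  shows "det A = A $$ (r,c) * cofactor A r c
     + det (mat N N (\<lambda>(i,j). if i = r \<and> j = c then 0 else A $$ (i,j)))"
proof -
  define A0 where "A0 = mat N N (\<lambda>(i,j). if i = r \<and> j = c then 0 else A $$ (i,j))"
  have A0: "A0 \<in> carrier_mat N N" unfolding A0_def by simp
  have del: "mat_delete A0 r j = mat_delete A r j" for j
    using A unfolding mat_delete_def A0_def by (intro eq_matI) auto
  have cof: "cofactor A0 r j = cofactor A r j" for j unfolding cofactor_def del ..
  have "det A = (\<Sum>j<N. A $$ (r,j) * cofactor A r j)" by (rule laplace_expansion_row[OF A r])
  also have "\<dots> = (\<Sum>j<N. (A0 $$ (r,j) + (if j = c then A $$ (r,c) else 0)) * cofactor A r j)"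
    using A r by (intro sum.cong) (auto simp: A0_def)
  also have "\<dots> = (\<Sum>j<N. A0 $$ (r,j) * cofactor A0 r j) + (\<Sum>j<N. (if j = c then A $$ (r,c) * cofactor A r c else 0))"
    unfolding sum.distrib[symmetric] by (rule sum.cong) (auto simp: cof distrib_right)
  also have "(\<Sum>j<N. (if j = c then A $$ (r,c) * cofactor A r c else 0)) = A $$ (r,c) * cofactor A r c"
    using c by (simp add: sum.delta)
  also have "(\<Sum>j<N. A0 $$ (r,j) * cofactor A0 r j) = det A0"
    by (simp add: laplace_expansion_row[OF A0 r, symmetric])
  finally show ?thesis unfolding A0_def by (simp add: add.commute)
qed

lemma H_mat_index:
  "i < s + t + 2 \<Longrightarrow> j < s + t + 2 \<Longrightarrow> H_mat h s t S T m n z $$ (i,j) = H_entry h s t S T m n z (Suc i) (Suc j)"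
  unfolding H_mat_def by simp

lemma H_mat_carrier: "H_mat h s t S T m n z \<in> carrier_mat (s+t+2) (s+t+2)"
  unfolding H_mat_def by simp

lemma H_mat_dim[simp]: "dim_row (H_mat h s t S T m n z) = s+t+2" "dim_col (H_mat h s t S T m n z) = s+t+2"
  unfolding H_mat_def by simp_all

lemma E1:
  assumes "m + n = m' + n'" "I \<noteq> s + 2" "J \<noteq> s + 1"
  shows "H_entry h s t S T m n z I J = H_entry h s t S T m' n' z I J"
proof -
  have nn: "n = m' + n' - m" using assms(1) by simp
  show ?thesis using assms(2,3) unfolding H_entry_def Let_def nn by (simp add: algebra_simps)
qed

lemma E2:
  assumes "s + 2 \<le> I" "J \<le> s + 1" "\<not> (I = s + 2 \<and> J = s + 1)"
  shows "H_entry h s t S T m n z I J = 0"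
  using assms unfolding H_entry_def by auto

lemma E3:
  assumes "\<not> (I \<le> s + 1 \<and> s + 2 \<le> J)" "\<not> (I = s + 2 \<and> J = s + 1)"
  shows "H_entry h s t S T m n z I J = H_entry h s t S T m n z' I J"
  using assms unfolding H_entry_def Let_def by auto

lemma E4: "H_entry h s t S T m n z (s+2) (s+1) = h z"
  unfolding H_entry_def by simp

theorem lemma2p4:
  fixes h :: "int \<Rightarrow> 'a::comm_ring_1"
    and s t :: nat and S T :: "nat \<Rightarrow> nat \<Rightarrow> int"
    and m n m' n' :: int
  assumes h0: "h 0 = 1"
    and hneg: "\<And>k. k < 0 \<Longrightarrow> h k = 0"
    and pos: "0 < m" "0 < n" "0 < m'" "0 < n'"
    and sum: "m + n = m' + n'"
  shows "\<forall>z z'. H_det h s t S T m n z - H_det h s t S T m' n' z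
              = H_det h s t S T m n z' - H_det h s t S T m' n' z'"
proof (intro allI)
  fix z z' :: int
  define N where "N = s + t + 2"
  define Z where "Z = (\<lambda>A :: 'a mat. mat N N (\<lambda>(i,j). if i = s+1 \<and> j = s then 0 else A $$ (i,j)))"
  have split: "H_det h s t S T a b w = h w * cofactor (H_mat h s t S T a b w) (s+1) s
      + det (Z (H_mat h s t S T a b w))" for a b w
  proof -
    have "H_det h s t S T a b w = H_mat h s t S T a b w $$ (s+1, s) * cofactor (H_mat h s t S T a b w) (s+1) s
      + det (Z (H_mat h s t S T a b w))"
      unfolding H_det_def Z_def N_def by (rule det_split_entry[OF H_mat_carrier]) auto
    moreover have "H_mat h s t S T a b w $$ (s+1, s) = h w"
      using E4[of h s t S T a b w] by (simp add: H_mat_index)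
    ultimately show ?thesis by simp
  qed
  have cof: "cofactor (H_mat h s t S T m n w) (s+1) s = cofactor (H_mat h s t S T m' n' w) (s+1) s" for w
  proof -
    have "mat_delete (H_mat h s t S T m n w) (s+1) s = mat_delete (H_mat h s t S T m' n' w) (s+1) s"
    proof (rule eq_matI)
      fix i j assume "i < dim_row (mat_delete (H_mat h s t S T m' n' w) (s+1) s)"
        "j < dim_col (mat_delete (H_mat h s t S T m' n' w) (s+1) s)"
      then have ij: "i < s + t + 1" "j < s + t + 1" by auto
      show "mat_delete (H_mat h s t S T m n w) (s+1) s $$ (i,j) = mat_delete (H_mat h s t S T m' n' w) (s+1) s $$ (i,j)"
        unfolding mat_delete_def using ij by (auto simp: H_mat_index intro!: E1[OF sum])
    qed simp_all
    then show ?thesis unfolding cofactor_def by simp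
  qed
  have Zc: "det (Z (H_mat h s t S T a b w)) = det (Z (H_mat h s t S T a b w'))" for a b w w'
  proof (rule det_block_eq[where K = "s+1"])
    show "Z (H_mat h s t S T a b w) \<in> carrier_mat N N" "Z (H_mat h s t S T a b w') \<in> carrier_mat N N"
      "s + 1 \<le> N" unfolding Z_def N_def by auto
  next
    fix i j assume "s + 1 \<le> i" "i < N" "j < s + 1"
    then show "Z (H_mat h s t S T a b w) $$ (i,j) = 0" "Z (H_mat h s t S T a b w') $$ (i,j) = 0"
      unfolding Z_def N_def by (auto simp: H_mat_index intro!: E2)
  next
    fix i j assume "i < N" "j < N" "\<not> (i < s + 1 \<and> s + 1 \<le> j)"
    then show "Z (H_mat h s t S T a b w) $$ (i,j) = Z (H_mat h s t S T a b w') $$ (i,j)"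
      unfolding Z_def N_def by (auto simp: H_mat_index intro!: E3)
  qed
  show "H_det h s t S T m n z - H_det h s t S T m' n' z
      = H_det h s t S T m n z' - H_det h s t S T m' n' z'"
    unfolding split cof using Zc by (metis add_diff_cancel_left)
qed

end
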